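(* Let $n \geq 2$ be an integer. Then $R_n^* = S_n T_n$. In particular $$\det R_n^* = M^*(n) = \sum_{k=1}^n \mu^*(k).$$
   Context: For positive integers $i,j$, $i \parallel j$ means $i \mid j$ and $\gcd(i,j/i)=1$. The unitary Möbius function is $\mu^*(m)=(-1)^{\omega(m)}$, with $\omega(m)$ the number of distinct prime factors of $m$. For real $x>0$ and a positive integer $m$, $M^*(x,m) := \sum_{k \leq x,\ \gcd(k,m)=1}\mu^*(k)$ (sum over positive integers $k$), and $M^*(x) := M^*(x,1)$. $R_n^*=(\rho_{ij})_{1\le i,j\le n}$ is the $n\times n$ matrix with $\rho_{ij}=1$ if $i \parallel j$ or $j=1$, and $\rho_{ij}=0$ otherwise. $S_n=(s_{ij})$ is the $n\times n$ matrix with $s_{ij}=1$ if $i\parallel j$ and $0$ otherwise. $T_n=(t_{ij})$ is the $n\times n$ matrix with $t_{i1}=M^*(n/i,i)$ for all $i$, $t_{ii}=1$ for $i\ge 2$, and $t_{ij}=0$ otherwise. *)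

theory Defs
  imports "Jordan_Normal_Form.Determinant" "HOL-Computational_Algebra.Primes"
begin

definition unitary_dvd :: "nat \<Rightarrow> nat \<Rightarrow> bool" where
  "unitary_dvd i j \<longleftrightarrow> i dvd j \<and> coprime i (j div i)"

definition mu_star :: "nat \<Rightarrow> int" where
  "mu_star m = (-1) ^ card (prime_factors m)"

definition M_star :: "real \<Rightarrow> nat \<Rightarrow> int" where
  "M_star x m = (\<Sum>k\<in>{k::nat. 1 \<le> k \<and> real k \<le> x \<and> coprime k m}. mu_star k)"

(* Matrices are n x n with 0-based indices in Jordan_Normal_Form;
   entry (i,j) corresponds to the paper's entry (i+1, j+1). *)
definition R_star :: "nat \<Rightarrow> int mat" where
  "R_star n = mat n n (\<lambda>(i,j). if unitary_dvd (i+1) (j+1) \<or> j + 1 = 1 then 1 else 0)"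

definition S_mat :: "nat \<Rightarrow> int mat" where
  "S_mat n = mat n n (\<lambda>(i,j). if unitary_dvd (i+1) (j+1) then 1 else 0)"

definition T_mat :: "nat \<Rightarrow> int mat" where
  "T_mat n = mat n n (\<lambda>(i,j). if j + 1 = 1 then M_star (real n / real (i+1)) (i+1)
                              else if i + 1 \<ge> 2 \<and> i = j then 1 else 0)"

end

theory Submission imports Defs begin

lemma ud_iff: "N > 0 \<Longrightarrow> unitary_dvd k N \<longleftrightarrow> (\<exists>r. N = k * r \<and> coprime k r)"
  unfolding unitary_dvd_def
  by (metis dvd_triv_left mult_0 nonzero_mult_div_cancel_left not_less0 dvd_mult_div_cancel)

lemma ud_pos: "unitary_dvd k N \<Longrightarrow> N > 0 \<Longrightarrow> k > 0 \<and> k dvd N"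
  unfolding unitary_dvd_def by (cases "k = 0") auto

lemma mu_star_1: "mu_star 1 = 1" by (simp add: mu_star_def)

lemma ud_split:
  fixes p q M :: nat
  assumes p: "prime p" and q: "q = p ^ a" and a: "a \<ge> 1" and cqM: "coprime q M" and M: "M > 0"
  shows "{k. unitary_dvd k (q*M)} = {v. unitary_dvd v M} \<union> (\<lambda>v. q * v) ` {v. unitary_dvd v M}"
    and "{v. unitary_dvd v M} \<inter> (\<lambda>v. q * v) ` {v. unitary_dvd v M} = {}"
    and "\<And>v. unitary_dvd v M \<Longrightarrow> mu_star (q * v) = - mu_star v"
proof -
  have q0: "q > 0" using q p by (simp add: prime_gt_0_nat)
  have qM0: "q * M > 0" using q0 M by simp
  have pq: "p dvd q" using q a by (simp add: dvd_power)
  have cop_q: "coprime q x" if "\<not> p dvd x" for x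
    using that p q by (simp add: coprime_power_left_iff prime_imp_coprime)
  have npM: "\<not> p dvd M"
    using cqM pq p by (metis coprime_common_divisor not_prime_unit)
  show "{k. unitary_dvd k (q*M)} = {v. unitary_dvd v M} \<union> (\<lambda>v. q * v) ` {v. unitary_dvd v M}"
  proof (intro equalityI subsetI)
    fix k assume "k \<in> {k. unitary_dvd k (q*M)}"
    then obtain r where kr: "q * M = k * r" "coprime k r" using ud_iff[OF qM0] by auto
    show "k \<in> {v. unitary_dvd v M} \<union> (\<lambda>v. q * v) ` {v. unitary_dvd v M}"
    proof (cases "p dvd k")
      case True
      then have "\<not> p dvd r" using kr(2) p by (metis coprime_common_divisor not_prime_unit)
      then have "coprime q r" by (rule cop_q)
      moreover have "q dvd k * r" using kr(1) by (metis dvd_triv_left)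
      ultimately have "q dvd k" by (simp add: coprime_dvd_mult_left_iff)
      then obtain v where v: "k = q * v" by auto
      then have "M = v * r" using kr(1) q0 by simp
      moreover have "coprime v r" using kr(2) v by simp
      ultimately have "unitary_dvd v M" using ud_iff[OF M] by auto
      then show ?thesis using v by auto
    next
      case False
      then have "coprime q k" by (rule cop_q)
      moreover have "k dvd q * M" using kr(1) by simp
      ultimately have "k dvd M" by (metis coprime_commute coprime_dvd_mult_right_iff)
      then obtain s where s: "M = k * s" by auto
      then have "r = q * s" using kr(1) q0 M
        by (metis mult.left_commute mult_cancel_left mult_is_0 not_less0 s)
      then have "coprime k s" using kr(2) by simp
      then have "unitary_dvd k M" using ud_iff[OF M] s by auto
      then show ?thesis by auto
    qed
  next
    fix k assume "k \<in> {v. unitary_dvd v M} \<union> (\<lambda>v. q * v) ` {v. unitary_dvd v M}"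
    then obtain v where v: "unitary_dvd v M" and kv: "k = v \<or> k = q * v" by auto
    then obtain s where s: "M = v * s" "coprime v s" using ud_iff[OF M] by auto
    have cqv: "coprime q v" using cqM s(1) by simp
    have cqs: "coprime q s" using cqM s(1) by simp
    from kv show "k \<in> {k. unitary_dvd k (q*M)}"
    proof
      assume "k = v"
      have "q * M = v * (q * s)" using s(1) by simp
      moreover have "coprime v (q * s)" using cqv s(2) by (simp add: coprime_commute)
      ultimately show ?thesis using ud_iff[OF qM0] \<open>k = v\<close> by blast
    next
      assume "k = q * v"
      have "q * M = (q * v) * s" using s(1) by simp
      moreover have "coprime (q * v) s" using cqs s(2) by simp
      ultimately show ?thesis using ud_iff[OF qM0] \<open>k = q * v\<close> by blast
    qed
  qed
  have npv: "\<not> p dvd v" if "unitary_dvd v M" for v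
    using ud_pos[OF that M] npM dvd_trans by blast
  show "{v. unitary_dvd v M} \<inter> (\<lambda>v. q * v) ` {v. unitary_dvd v M} = {}"
  proof (rule equals0I)
    fix x assume "x \<in> {v. unitary_dvd v M} \<inter> (\<lambda>v. q * v) ` {v. unitary_dvd v M}"
    then obtain w where "unitary_dvd x M" "x = q * w" by auto
    then show False using npv pq by (metis dvd_mult2)
  qed
  fix v assume v: "unitary_dvd v M"
  have v0: "v > 0" using ud_pos[OF v M] by simp
  have pfq: "prime_factors q = {p}" using q a p
    by (simp add: prime_factorization_prime_power)
  have "prime_factors (q * v) = insert p (prime_factors v)"
    using prime_factors_product[of q v] q0 v0 pfq by simp
  moreover have "p \<notin> prime_factors v" using npv[OF v] by auto
  ultimately have "card (prime_factors (q * v)) = Suc (card (prime_factors v))" by simp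
  then show "mu_star (q * v) = - mu_star v" unfolding mu_star_def by simp
qed

lemma split_facts:
  fixes p N :: nat
  assumes p: "prime p" and N: "N > 0" and pN: "p dvd N"
  defines "q \<equiv> p ^ multiplicity p N"
  defines "M \<equiv> N div q"
  shows "coprime q M" and "M > 0" and "N = q * M" and "multiplicity p N \<ge> 1"
proof -
  have qN: "q dvd N" unfolding q_def by (simp add: multiplicity_dvd)
  have NqM: "N = q * M" unfolding M_def using qN by simp
  show m1: "multiplicity p N \<ge> 1" using p N pN
    by (simp add: prime_multiplicity_gt_zero_iff Suc_le_eq)
  have npM: "\<not> p dvd M"
  proof
    assume "p dvd M"
    then have "p * q dvd N" using NqM by simp
    then have "p ^ Suc (multiplicity p N) dvd N" unfolding q_def by simp
    then show False using p N
      by (subst (asm) power_dvd_iff_le_multiplicity) (auto simp: not_prime_unit)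
  qed
  show cqM: "coprime q M" unfolding q_def using p npM
    by (simp add: coprime_power_left_iff prime_imp_coprime)
  show M0: "M > 0" using N NqM by (cases "M = 0") auto
  show "N = q * M" by (rule NqM)
qed

lemma ud_finite: "M > 0 \<Longrightarrow> finite {v. unitary_dvd v M}"
  by (rule finite_subset[of _ "{..M}"]) (auto dest: ud_pos dvd_imp_le)

lemma ud_sum:
  assumes N: "N > 0"
  shows "(\<Sum>k\<in>{k. unitary_dvd k N}. mu_star k) = (if N = 1 then 1 else 0)"
proof (cases "N = 1")
  case True
  have "{k. unitary_dvd k N} = {1}"
    using True by (auto simp: unitary_dvd_def)
  then show ?thesis using True mu_star_1 by simp
next
  case False
  then obtain p where p: "prime p" "p dvd N" using prime_factor_nat by blast
  define q where "q = p ^ multiplicity p N"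
  define M where "M = N div q"
  note sf = split_facts[OF p(1) N p(2), folded q_def, folded M_def]
  note us = ud_split[OF p(1) q_def sf(4) sf(1) sf(2)]
  have q0: "q > 0" using p(1) q_def by (simp add: prime_gt_0_nat)
  have fin: "finite {v. unitary_dvd v M}" using ud_finite sf(2) by blast
  have "(\<Sum>k\<in>{k. unitary_dvd k N}. mu_star k)
      = (\<Sum>k\<in>{v. unitary_dvd v M}. mu_star k) + (\<Sum>k\<in>(\<lambda>v. q * v) ` {v. unitary_dvd v M}. mu_star k)"
    unfolding sf(3) us(1) using fin us(2) by (simp add: sum.union_disjoint)
  also have "(\<Sum>k\<in>(\<lambda>v. q * v) ` {v. unitary_dvd v M}. mu_star k) = (\<Sum>v\<in>{v. unitary_dvd v M}. mu_star (q * v))"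
    using q0 by (subst sum.reindex) (auto simp: inj_on_def)
  also have "\<dots> = (\<Sum>v\<in>{v. unitary_dvd v M}. - mu_star v)"
    using us(3) by simp
  finally show ?thesis using False by (simp add: sum_negf)
qed

lemma col_sum:
  assumes d1: "1 \<le> d" and dn: "d \<le> n"
  shows "(\<Sum>m\<in>{m\<in>{1..n}. unitary_dvd d m}. M_star (real n / real m) m) = 1"
proof -
  define A where "A = {m\<in>{1..n}. unitary_dvd d m}"
  define K where "K = (\<lambda>m. {k::nat. 1 \<le> k \<and> real k \<le> real n / real m \<and> coprime k m})"
  define B where "B = {L\<in>{1..n}. unitary_dvd d L}"
  define U where "U = (\<lambda>L. {k. unitary_dvd k (L div d)})"
  have finA: "finite A" unfolding A_def by simp
  have finK: "finite (K m)" if "m \<in> A" for m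
  proof (rule finite_subset[of _ "{..n}"])
    show "K m \<subseteq> {..n}"
    proof
      fix k assume "k \<in> K m"
      then have "real k \<le> real n / real m" "m \<ge> 1" using that unfolding K_def A_def by auto
      then have "real k * real m \<le> real n" by (simp add: le_divide_eq)
      then have "real (k * m) \<le> real n" by simp
      then have "k * m \<le> n" by (simp only: of_nat_le_iff)
      moreover have "k \<le> k * m" using \<open>m \<ge> 1\<close> by simp
      ultimately have "k \<le> n" by linarith
      then show "k \<in> {..n}" by simp
    qed
  qed simp
  have finB: "finite B" unfolding B_def by simp
  have d0: "d > 0" using d1 by simp
  have finU: "finite (U L)" if "L \<in> B" for L
  proof -
    have "L > 0" "d dvd L" using that ud_pos[of d L] unfolding B_def by auto
    then have "L div d > 0" using d0 by (auto elim!: dvdE)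
    then show ?thesis unfolding U_def by (rule ud_finite)
  qed
  have "(\<Sum>m\<in>A. M_star (real n / real m) m) = (\<Sum>m\<in>A. \<Sum>k\<in>K m. mu_star k)"
    unfolding M_star_def K_def by simp
  also have "\<dots> = (\<Sum>(m,k)\<in>Sigma A K. mu_star k)"
    using finA finK by (subst sum.Sigma) auto
  also have "\<dots> = (\<Sum>(L,k)\<in>Sigma B U. mu_star k)"
  proof (rule sum.reindex_bij_witness[where i = "\<lambda>(L,k). (L div k, k)" and j = "\<lambda>(m,k). (m*k, k)"])
    fix a assume a: "a \<in> Sigma A K"
    obtain m k where mk: "a = (m,k)" by force
    have m: "1 \<le> m" "m \<le> n" "unitary_dvd d m" and k: "1 \<le> k" "real k \<le> real n / real m" "coprime k m"
      using a mk unfolding A_def K_def by auto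
    show "(\<lambda>(L,k). (L div k, k)) ((\<lambda>(m,k). (m*k, k)) a) = a" using mk k by simp
    show "(\<lambda>(m, k). mu_star k) ((\<lambda>(m,k). (m*k, k)) a) = (\<lambda>(m, k). mu_star k) a" using mk by simp
    have "real k * real m \<le> real n" using k m by (simp add: le_divide_eq)
    then have "real (m * k) \<le> real n" by (simp add: mult.commute)
    then have mkn: "m * k \<le> n" by (simp only: of_nat_le_iff)
    obtain e where e: "m = d * e" "coprime d e" using ud_iff[of m d] m by auto
    have e0: "e > 0" using e m by (cases "e = 0") auto
    have "coprime d k" using k(3) e(1) by (simp add: coprime_commute)
    then have "coprime d (e * k)" using e(2) by simp
    then have "unitary_dvd d (m * k)" using ud_iff[of "m*k" d] e(1) m(1) k(1) by (simp add: mult.assoc)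
    moreover have "m * k div d = e * k" using e(1) d0 by simp
    moreover have "unitary_dvd k (e * k)" using ud_iff[of "e*k" k] e0 k(1) k(3) e(1)
      by (simp add: mult.commute)
    moreover have "1 \<le> m * k" using m k by simp
    ultimately show "(\<lambda>(m,k). (m*k, k)) a \<in> Sigma B U" using mk mkn unfolding B_def U_def by simp
  next
    fix b assume b: "b \<in> Sigma B U"
    obtain L k where Lk: "b = (L,k)" by force
    have L: "1 \<le> L" "L \<le> n" "unitary_dvd d L" and k: "unitary_dvd k (L div d)"
      using b Lk unfolding B_def U_def by auto
    obtain N where N: "L = d * N" "coprime d N" using ud_iff[of L d] L by auto
    have N0: "N > 0" using N L by (cases "N = 0") auto
    have LdN: "L div d = N" using N d0 by simp
    obtain e where e: "N = k * e" "coprime k e" using ud_iff[of N k] k N0 LdN by auto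
    have k0: "k > 0" and e0: "e > 0" using e(1) N0 by auto
    have Lk2: "L div k = d * e" using N(1) e(1) k0 by simp
    show "(\<lambda>(m,k). (m*k, k)) ((\<lambda>(L,k). (L div k, k)) b) = b" using Lk Lk2 N(1) e(1) by simp
    have cde: "coprime d e" using N(2) e(1) by simp
    have cdk: "coprime k d" using N(2) e(1) by (simp add: coprime_commute)
    have "unitary_dvd d (d * e)" using ud_iff[of "d*e" d] cde d0 e0 by auto
    moreover have "1 \<le> d * e" using d0 e0 by (simp add: Suc_le_eq)
    moreover have "d * e \<le> n"
    proof -
      have "d * e \<le> d * e * k" using k0 by simp
      also have "\<dots> = L" using N(1) e(1) by simp
      finally show ?thesis using L(2) by simp
    qed
    moreover have "real k \<le> real n / real (d * e)"
    proof -
      have "k * (d * e) \<le> n" using L(2) N(1) e(1) by (simp add: ac_simps)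
      then have "real (k * (d * e)) \<le> real n" by (simp only: of_nat_le_iff)
      then have "real k * real (d * e) \<le> real n" by simp
      then show ?thesis using d0 e0 by (simp add: le_divide_eq)
    qed
    moreover have "coprime k (d * e)" using cdk e(2) by simp
    ultimately show "(\<lambda>(L,k). (L div k, k)) b \<in> Sigma A K"
      using Lk Lk2 k0 unfolding A_def K_def by simp
  qed
  also have "\<dots> = (\<Sum>L\<in>B. \<Sum>k\<in>U L. mu_star k)"
    using finB finU by (subst sum.Sigma) auto
  also have "\<dots> = (\<Sum>L\<in>B. if L = d then 1 else 0)"
  proof (rule sum.cong[OF refl])
    fix L assume "L \<in> B"
    then have L: "L \<ge> 1" "unitary_dvd d L" unfolding B_def by auto
    obtain N where N: "L = d * N" using L ud_pos[of d L] by (auto elim!: dvdE)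
    have N0: "N > 0" using N L by (cases "N = 0") auto
    have "L div d = N" using N d0 by simp
    then show "(\<Sum>k\<in>U L. mu_star k) = (if L = d then 1 else 0)"
      unfolding U_def using ud_sum[OF N0] N d0 by auto
  qed
  also have "\<dots> = 1"
  proof -
    have "d \<in> B" unfolding B_def using d1 dn by (simp add: unitary_dvd_def)
    then show ?thesis using finB by simp
  qed
  finally show ?thesis unfolding A_def .
qed


lemma ud_refl: "k > 0 \<Longrightarrow> unitary_dvd k k"
  by (simp add: unitary_dvd_def)

lemma col0:
  assumes "i < n"
  shows "(\<Sum>k<n. (if unitary_dvd (Suc i) (Suc k) then 1 else 0) * M_star (real n / real (Suc k)) (Suc k)) = 1"
proof -
  define g where "g = (\<lambda>m. (if unitary_dvd (Suc i) m then 1 else 0) * M_star (real n / real m) m)"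
  have "(\<Sum>k<n. g (Suc k)) = sum g {Suc 0..n}" by (rule sum.atLeast1_atMost_eq[symmetric])
  also have "\<dots> = (\<Sum>m\<in>{1..n}. if unitary_dvd (Suc i) m then M_star (real n / real m) m else 0)"
    unfolding g_def by (intro sum.cong) auto
  also have "\<dots> = (\<Sum>m\<in>{m\<in>{1..n}. unitary_dvd (Suc i) m}. M_star (real n / real m) m)"
    by (rule sum.inter_filter[symmetric]) simp
  also have "\<dots> = 1" using col_sum[of "Suc i" n] assms by simp
  finally show ?thesis unfolding g_def .
qed

theorem theorem2:
  fixes n :: nat
  assumes "n \<ge> 2"
  shows "R_star n = S_mat n * T_mat n
    \<and> det (R_star n) = M_star (real n) 1
    \<and> M_star (real n) 1 = (\<Sum>k=1..n. mu_star k)"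
proof -
  have S: "S_mat n \<in> carrier_mat n n" and T: "T_mat n \<in> carrier_mat n n"
    unfolding S_mat_def T_mat_def by simp_all
  have eq: "R_star n = S_mat n * T_mat n"
  proof (rule eq_matI)
    show "dim_row (R_star n) = dim_row (S_mat n * T_mat n)"
      "dim_col (R_star n) = dim_col (S_mat n * T_mat n)"
      unfolding R_star_def S_mat_def T_mat_def by simp_all
    fix i j assume ij: "i < dim_row (S_mat n * T_mat n)" "j < dim_col (S_mat n * T_mat n)"
    then have i: "i < n" and j: "j < n" unfolding S_mat_def T_mat_def by simp_all
    have e: "(S_mat n * T_mat n) $$ (i,j) = (\<Sum>k<n. S_mat n $$ (i,k) * T_mat n $$ (k,j))"
      using i j S T by (simp add: scalar_prod_def atLeast0LessThan)
    show "R_star n $$ (i,j) = (S_mat n * T_mat n) $$ (i,j)"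
    proof (cases "j = 0")
      case True
      have "(\<Sum>k<n. S_mat n $$ (i,k) * T_mat n $$ (k,j))
          = (\<Sum>k<n. (if unitary_dvd (Suc i) (Suc k) then 1 else 0) * M_star (real n / real (Suc k)) (Suc k))"
        using True i j by (intro sum.cong) (auto simp: S_mat_def T_mat_def)
      also have "\<dots> = 1" using col0[OF i] .
      finally show ?thesis using e True i j by (simp add: R_star_def)
    next
      case False
      have "(\<Sum>k<n. S_mat n $$ (i,k) * T_mat n $$ (k,j))
          = (\<Sum>k<n. if k = j then S_mat n $$ (i,j) else 0)"
        using False j by (intro sum.cong) (auto simp: T_mat_def)
      also have "\<dots> = S_mat n $$ (i,j)" using j by simp
      finally show ?thesis using e False i j by (simp add: R_star_def S_mat_def)
    qed
  qed
  have detS: "det (S_mat n) = 1"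
  proof -
    have ut: "upper_triangular (S_mat n)"
      unfolding upper_triangular_def
    proof (intro allI impI)
      fix i j assume "i < dim_row (S_mat n)" "j < i"
      moreover have "\<not> unitary_dvd (Suc i) (Suc j)"
        using \<open>j < i\<close> by (auto simp: unitary_dvd_def dest: dvd_imp_le)
      ultimately show "S_mat n $$ (i,j) = 0" by (simp add: S_mat_def)
    qed
    have "det (S_mat n) = (\<Prod>i = 0..<n. S_mat n $$ (i,i))"
      using det_upper_triangular[OF ut S] by (simp add: prod_list_diag_prod S_mat_def)
    also have "\<dots> = 1" by (intro prod.neutral) (simp add: S_mat_def unitary_dvd_def)
    finally show ?thesis .
  qed
  have detT: "det (T_mat n) = M_star (real n) 1"
  proof -
    have "det (T_mat n) = prod_list (diag_mat (T_mat n))"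
      by (rule det_lower_triangular[OF _ T]) (simp add: T_mat_def)
    also have "\<dots> = (\<Prod>i = 0..<n. T_mat n $$ (i,i))"
      by (simp add: prod_list_diag_prod T_mat_def)
    also have "\<dots> = (\<Prod>i = 0..<n. if i = 0 then M_star (real n) 1 else 1)"
      by (intro prod.cong) (auto simp: T_mat_def)
    also have "\<dots> = M_star (real n) 1" using assms by (simp add: prod.delta)
    finally show ?thesis .
  qed
  have det: "det (R_star n) = M_star (real n) 1"
    using eq det_mult[OF S T] detS detT by simp
  have "{k::nat. 1 \<le> k \<and> real k \<le> real n \<and> coprime k 1} = {1..n}" by auto
  then have "M_star (real n) 1 = (\<Sum>k=1..n. mu_star k)" unfolding M_star_def by simp
  with eq det show ?thesis by simp
qed

end
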